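(* Let $M\ge 2$, $D,Q,K$ positive integers, and let $\varphi:\mathbb{R}^D\times R\to\mathbb{R}^K$, $(\bm{x},\rho)\mapsto\varphi(\bm{x};\rho)$, be a function on a parameter set $R$ such that for every $\bm{x}\in\mathbb{R}^D$ there exists $\rho\in R$ with $\varphi(\bm{x};\rho)\neq\bm{0}$. Consider networks $\mathcal{F}=\{F_i\}_{i=1}^M$ with $F_i(\bm{x}) = \bm{W}^i\varphi(\bm{x};\rho^i)$, parametrised by $\bm{W}^i\in\mathbb{R}^{Q\times K}$ and $\rho^i\in R$. Let $\mathcal{D}=\{(\bm{x}_n,\bm{y}_n)\}_{n=1}^N$ be a nonempty finite data set in $\mathbb{R}^D\times\mathbb{R}^Q$, $\overline{F}=\frac1M\sum_i F_i$, and $$E_\lambda(\mathcal{F},\mathcal{D}) = \frac{1}{N}\sum_{n=1}^N\Big(\frac{1}{M}\sum_{i=1}^M\|F_i(\bm{x}_n)-\bm{y}_n\|^2-\lambda\frac{1}{M}\sum_{i=1}^M\|F_i(\bm{x}_n)-\overline{F}(\bm{x}_n)\|^2\Big).$$ With infima over all parametrisations $(\bm{W}^i,\rho^i)_{i=1}^M$: (i) if $\lambda\le1$ then $\inf E_\lambda(\mathcal{F},\mathcal{D})\ge0$; (ii) if $\lambda>1$ then $\inf E_\lambda(\mathcal{F},\mathcal{D})=-\infty$. Moreover, if $\lambda>1$, then for all $Q_1,Q_2>0$ there exists a parametrisation with $E_\lambda(\mathcal{F},\mathcal{D})<-Q_1$, $\frac1N\sum_n\|\overline{F}(\bm{x}_n)-\bm{y}_n\|^2>Q_2$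 and $\frac1N\sum_n\frac1M\sum_i\|F_i(\bm{x}_n)-\bm{y}_n\|^2>Q_2$.
   Context: Networks of this form are called Modular Linear Top Layer Networks. $\|\cdot\|$ is the Euclidean norm. *)

theory Defs
  imports "HOL-Analysis.Analysis"
begin

text \<open>Parameters: W :: nat => Q x K matrix, rho :: nat => parameter, indices 0..M-1.
  Data set: nonempty list of pairs (x_n, y_n).\<close>

definition member_out ::
  "('d \<Rightarrow> 'r \<Rightarrow> real^'k) \<Rightarrow> (nat \<Rightarrow> real^'k^'q) \<Rightarrow> (nat \<Rightarrow> 'r) \<Rightarrow> nat \<Rightarrow> 'd \<Rightarrow> real^'q"
  where "member_out phi W rho i x = W i *v phi x (rho i)"

definition ens_mean ::
  "nat \<Rightarrow> ('d \<Rightarrow> 'r \<Rightarrow> real^'k) \<Rightarrow> (nat \<Rightarrow> real^'k^'q) \<Rightarrow> (nat \<Rightarrow> 'r) \<Rightarrow> 'd \<Rightarrow> real^'q"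
  where "ens_mean M phi W rho x = (1 / real M) *\<^sub>R (\<Sum>i<M. member_out phi W rho i x)"

definition E_lambda ::
  "real \<Rightarrow> nat \<Rightarrow> ('d \<Rightarrow> 'r \<Rightarrow> real^'k) \<Rightarrow> ('d \<times> (real^'q)) list \<Rightarrow> (nat \<Rightarrow> real^'k^'q) \<Rightarrow> (nat \<Rightarrow> 'r) \<Rightarrow> real"
  where "E_lambda lam M phi D W rho =
    (1 / real (length D)) * (\<Sum>(x, y) \<leftarrow> D.
       (1 / real M) * (\<Sum>i<M. (norm (member_out phi W rho i x - y))\<^sup>2)
       - lam * ((1 / real M) * (\<Sum>i<M. (norm (member_out phi W rho i x - ens_mean M phi W rho x))\<^sup>2)))"

definition ens_error ::
  "nat \<Rightarrow> ('d \<Rightarrow> 'r \<Rightarrow> real^'k) \<Rightarrow> ('d \<times> (real^'q)) list \<Rightarrow> (nat \<Rightarrow> real^'k^'q) \<Rightarrow> (nat \<Rightarrow> 'r) \<Rightarrow> real"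
  where "ens_error M phi D W rho =
    (1 / real (length D)) * (\<Sum>(x, y) \<leftarrow> D. (norm (ens_mean M phi W rho x - y))\<^sup>2)"

definition avg_member_error ::
  "nat \<Rightarrow> ('d \<Rightarrow> 'r \<Rightarrow> real^'k) \<Rightarrow> ('d \<times> (real^'q)) list \<Rightarrow> (nat \<Rightarrow> real^'k^'q) \<Rightarrow> (nat \<Rightarrow> 'r) \<Rightarrow> real"
  where "avg_member_error M phi D W rho =
    (1 / real (length D)) * (\<Sum>(x, y) \<leftarrow> D.
       (1 / real M) * (\<Sum>i<M. (norm (member_out phi W rho i x - y))\<^sup>2))"

end

theory Submission imports Defs begin


lemma decomp:
  fixes f :: "nat \<Rightarrow> 'a::real_inner"
  assumes "M > 0"
  shows "(\<Sum>i<M. (norm (f i - y))\<^sup>2) =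
     real M * (norm ((1/real M) *\<^sub>R (\<Sum>i<M. f i) - y))\<^sup>2 + (\<Sum>i<M. (norm (f i - (1/real M) *\<^sub>R (\<Sum>i<M. f i)))\<^sup>2)"
proof -
  define m where "m = (1/real M) *\<^sub>R (\<Sum>i<M. f i)"
  have sm: "(\<Sum>i<M. f i) = real M *\<^sub>R m" using assms by (simp add: m_def)
  have pt: "(norm (f i - y))\<^sup>2 = (norm (f i - m))\<^sup>2 + 2 * inner (f i - m) (m - y) + (norm (m - y))\<^sup>2" for i
  proof -
    have "f i - y = (f i - m) + (m - y)" by simp
    then show ?thesis by (metis power2_norm_eq_inner inner_add_left inner_add_right inner_commute mult_2 add.assoc)
  qed
  have z: "(\<Sum>i<M. inner (f i - m) (m - y)) = 0"
    by (simp add: inner_sum_left[symmetric] sum_subtractf sm inner_diff_left) 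
  have "(\<Sum>i<M. (norm (f i - y))\<^sup>2) = (\<Sum>i<M. (norm (f i - m))\<^sup>2) + 2 * (\<Sum>i<M. inner (f i - m) (m - y)) + real M * (norm (m - y))\<^sup>2"
    by (simp add: pt sum.distrib sum_distrib_left)
  then show ?thesis using z by (simp add: m_def)
qed


lemma E_alt:
  fixes M :: nat
  assumes "M > 0"
  shows "E_lambda lam M phi D W rho = (1/real (length D)) * (\<Sum>(x, y) \<leftarrow> D.
     (norm (ens_mean M phi W rho x - y))\<^sup>2 + (1 - lam) * ((1/real M) * (\<Sum>i<M. (norm (member_out phi W rho i x - ens_mean M phi W rho x))\<^sup>2)))"
proof -
  have pt: "(1 / real M) * (\<Sum>i<M. (norm (member_out phi W rho i x - y))\<^sup>2)
       - lam * ((1 / real M) * (\<Sum>i<M. (norm (member_out phi W rho i x - ens_mean M phi W rho x))\<^sup>2))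
     = (norm (ens_mean M phi W rho x - y))\<^sup>2 + (1 - lam) * ((1/real M) * (\<Sum>i<M. (norm (member_out phi W rho i x - ens_mean M phi W rho x))\<^sup>2))" for x y
    using decomp[OF assms, of "\<lambda>i. member_out phi W rho i x" y] assms
    unfolding ens_mean_def by (simp add: field_simps)
  show ?thesis unfolding E_lambda_def by (simp only: pt)
qed

lemma avg_ge:
  fixes M :: nat
  assumes "M > 0"
  shows "avg_member_error M phi D W rho \<ge> ens_error M phi D W rho"
proof -
  have pt: "(norm (ens_mean M phi W rho x - y))\<^sup>2 \<le> (1 / real M) * (\<Sum>i<M. (norm (member_out phi W rho i x - y))\<^sup>2)" for x y
  proof -
    have "0 \<le> (\<Sum>i<M. (norm (member_out phi W rho i x - ens_mean M phi W rho x))\<^sup>2)"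
      by (intro sum_nonneg) auto
    then show ?thesis
      using decomp[OF assms, of "\<lambda>i. member_out phi W rho i x" y] assms
      unfolding ens_mean_def by (simp add: field_simps)
  qed
  show ?thesis unfolding avg_member_error_def ens_error_def
    by (intro mult_left_mono sum_list_mono) (use pt in \<open>auto split: prod.splits\<close>)
qed

lemma sum_d: assumes "2 \<le> (M::nat)" shows "(\<Sum>i<M. (if i = 0 then t else if i = 1 then - t else (0::real))) = 0"
  using assms by (induction rule: dec_induct) (auto simp: numeral_2_eq_2 lessThan_Suc)

lemma sum_d2: assumes "2 \<le> (M::nat)" shows "(\<Sum>i<M. (if i = 0 then t else if i = 1 then - t else (0::real))\<^sup>2) = 2 * t\<^sup>2"
  using assms by (induction rule: dec_induct) (auto simp: numeral_2_eq_2 lessThan_Suc)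


lemma construct:
  fixes M :: nat
    and phi :: "real^'d \<Rightarrow> 'r \<Rightarrow> real^'k"
    and R :: "'r set"
    and D :: "((real^'d) \<times> (real^'q)) list"
  assumes M2: "M \<ge> 2"
    and nz: "\<forall>x. \<exists>\<rho>\<in>R. phi x \<rho> \<noteq> 0"
    and DN: "D \<noteq> []"
    and lam: "lam > 1" and Q1: "Q1 > 0" and Q2: "Q2 > 0"
  shows "\<exists>W rho. (\<forall>i. rho i \<in> R) \<and> E_lambda lam M phi D W rho < - Q1
                 \<and> ens_error M phi D W rho > Q2 \<and> avg_member_error M phi D W rho > Q2"
proof -
  have M0: "M > 0" using M2 by simp
  obtain x1 y1 where hd: "(x1, y1) \<in> set D" using DN by (cases D) auto
  obtain r0 where r0: "r0 \<in> R" "phi x1 r0 \<noteq> 0" using nz by blast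
  define v where "v = phi x1 r0"
  define A :: "real^'k^'q" where "A = (\<chi> j. v)"
  define a where "a x = A *v phi x r0" for x
  have ax: "a x $ j = inner v (phi x r0)" for x j
    by (simp add: a_def A_def matrix_vector_mult_def inner_vec_def)
  have a1: "a x1 \<noteq> 0"
  proof
    assume "a x1 = 0"
    then have "a x1 $ undefined = 0" by simp
    then have "inner v v = 0" using ax[of x1] v_def by simp
    then show False using r0 v_def by simp
  qed
  define N where "N = real (length D)"
  have N0: "N > 0" using DN N_def by simp
  define na where "na = norm (a x1)"
  have na0: "na > 0" using a1 na_def by simp
  define s where "s = (norm y1 + sqrt (N * Q2) + 1) / na"
  define G where "G = (1/N) * (\<Sum>(x, y) \<leftarrow> D. (norm (s *\<^sub>R a x - y))\<^sup>2)"
  define S where "S = (\<Sum>(x, y) \<leftarrow> D. (norm (a x))\<^sup>2)"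
  have S0: "S > 0"
  proof -
    have "(norm (a x1))\<^sup>2 \<le> S" unfolding S_def
      using member_le_sum_list[of "(norm (a x1))\<^sup>2" "map (\<lambda>(x, y). (norm (a x))\<^sup>2) D"] hd
      by (force)
    then show ?thesis using na0 na_def by (smt (verit) zero_less_power)
  qed
  have G: "G > Q2"
  proof -
    have "norm (s *\<^sub>R a x1 - y1) \<ge> norm (s *\<^sub>R a x1) - norm y1" by (rule norm_triangle_ineq2)
    moreover have "norm (s *\<^sub>R a x1) = s * na"
      using na0 na_def s_def N0 Q2 by (simp add: divide_nonneg_pos)
    moreover have "s * na = norm y1 + sqrt (N * Q2) + 1" using na0 s_def by simp
    ultimately have h: "norm (s *\<^sub>R a x1 - y1) \<ge> sqrt (N * Q2) + 1" by linarith
    have "N * Q2 = (sqrt (N * Q2))\<^sup>2" using N0 Q2 by simp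
    also have "\<dots> < (norm (s *\<^sub>R a x1 - y1))\<^sup>2"
      using h N0 Q2 by (intro power_strict_mono) auto
    also have "\<dots> \<le> (\<Sum>(x, y) \<leftarrow> D. (norm (s *\<^sub>R a x - y))\<^sup>2)"
      using member_le_sum_list[of "(norm (s *\<^sub>R a x1 - y1))\<^sup>2" "map (\<lambda>(x, y). (norm (s *\<^sub>R a x - y))\<^sup>2) D"] hd
      by force
    finally show ?thesis unfolding G_def using N0 by (simp add: field_simps)
  qed
  have G0: "G \<ge> 0" using G Q2 by simp
  define T where "T = (G + Q1 + 1) * real M * N / (2 * (lam - 1) * S)"
  have T0: "T > 0" unfolding T_def using G0 Q1 M0 N0 lam S0 by (intro divide_pos_pos mult_pos_pos) auto
  define t where "t = sqrt T"
  have t2: "t\<^sup>2 = T" using T0 t_def by simp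
  define d :: "nat \<Rightarrow> real" where "d i = (if i = 0 then t else if i = 1 then - t else (0::real))" for i
  define W :: "nat \<Rightarrow> real^'k^'q" where "W i = (s + d i) *\<^sub>R A" for i
  define rho where "rho i = r0" for i :: nat
  have mo: "member_out phi W rho i x = (s + d i) *\<^sub>R a x" for i x
    by (simp add: member_out_def W_def rho_def a_def scaleR_matrix_vector_assoc)
  have sd: "(\<Sum>i<M. d i) = 0" unfolding d_def using sum_d[OF M2] .
  have sd2: "(\<Sum>i<M. (d i)\<^sup>2) = 2 * t\<^sup>2" unfolding d_def using sum_d2[OF M2] .
  have em: "ens_mean M phi W rho x = s *\<^sub>R a x" for x
  proof -
    have "(\<Sum>i<M. member_out phi W rho i x) = (\<Sum>i<M. (s + d i)) *\<^sub>R a x"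
      by (simp add: mo scaleR_sum_left)
    also have "(\<Sum>i<M. (s + d i)) = real M * s" by (simp add: sum.distrib sd)
    finally show ?thesis using M0 by (simp add: ens_mean_def)
  qed
  have diff: "(\<Sum>i<M. (norm (member_out phi W rho i x - ens_mean M phi W rho x))\<^sup>2) = 2 * t\<^sup>2 * (norm (a x))\<^sup>2" for x
  proof -
    have "(\<Sum>i<M. (norm (member_out phi W rho i x - ens_mean M phi W rho x))\<^sup>2) = (\<Sum>i<M. (d i)\<^sup>2 * (norm (a x))\<^sup>2)"
      by (intro sum.cong) (auto simp: mo em algebra_simps power_mult_distrib)
    also have "\<dots> = 2 * t\<^sup>2 * (norm (a x))\<^sup>2" by (simp add: sum_distrib_right[symmetric] sd2)
    finally show ?thesis .
  qed
  have E: "E_lambda lam M phi D W rho = G - (lam - 1) * 2 * t\<^sup>2 / (real M * N) * S"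
  proof -
    have "E_lambda lam M phi D W rho = (1/N) * (\<Sum>(x, y) \<leftarrow> D. (norm (s *\<^sub>R a x - y))\<^sup>2 + ((1 - lam) * 2 * t\<^sup>2 / real M) * (norm (a x))\<^sup>2)"
      unfolding E_alt[OF M0] N_def diff by (simp add: em algebra_simps)
    also have "\<dots> = (1/N) * ((\<Sum>(x, y) \<leftarrow> D. (norm (s *\<^sub>R a x - y))\<^sup>2) + ((1 - lam) * 2 * t\<^sup>2 / real M) * S)"
      unfolding S_def by (simp only: split_def sum_list_addf sum_list_const_mult)
    finally show ?thesis unfolding G_def using N0 M0 by (simp add: field_simps)
  qed
  have "(lam - 1) * 2 * t\<^sup>2 / (real M * N) * S = G + Q1 + 1"
    unfolding t2 T_def using lam S0 M0 N0 by (simp add: field_simps)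
  then have E': "E_lambda lam M phi D W rho < - Q1" using E by simp
  have ee: "ens_error M phi D W rho = G"
    unfolding ens_error_def G_def N_def by (simp add: em)
  show ?thesis
    using E' ee G avg_ge[OF M0, of phi D W rho] rho_def r0 by (intro exI[of _ W] exI[of _ rho]) auto
qed


theorem theorem5:
  fixes M :: nat
    and phi :: "real^'d \<Rightarrow> 'r \<Rightarrow> real^'k"
    and R :: "'r set"
    and D :: "((real^'d) \<times> (real^'q)) list"
  assumes "M \<ge> 2"
    and "\<forall>x. \<exists>\<rho>\<in>R. phi x \<rho> \<noteq> 0"
    and "D \<noteq> []"
  shows "(lam \<le> 1 \<longrightarrow>
            (INF (W, rho) \<in> {(W, rho). \<forall>i. rho i \<in> R}. ereal (E_lambda lam M phi D W rho)) \<ge> 0)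
       \<and> (lam > 1 \<longrightarrow>
            (INF (W, rho) \<in> {(W, rho). \<forall>i. rho i \<in> R}. ereal (E_lambda lam M phi D W rho)) = -\<infinity>)
       \<and> (lam > 1 \<longrightarrow> (\<forall>Q1 Q2. Q1 > 0 \<longrightarrow> Q2 > 0 \<longrightarrow>
            (\<exists>W rho. (\<forall>i. rho i \<in> R) \<and> E_lambda lam M phi D W rho < - Q1
                 \<and> ens_error M phi D W rho > Q2 \<and> avg_member_error M phi D W rho > Q2)))"
proof (intro conjI impI allI)
  have M0: "M > 0" using assms by simp
  show "(INF (W, rho) \<in> {(W, rho). \<forall>i. rho i \<in> R}. ereal (E_lambda lam M phi D W rho)) \<ge> 0"
    if l: "lam \<le> 1"
  proof (rule INF_greatest, clarify)
    fix W :: "nat \<Rightarrow> real^'k^'q" and rho :: "nat \<Rightarrow> 'r"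
    have "0 \<le> E_lambda lam M phi D W rho"
      unfolding E_alt[OF M0]
      using l by (intro mult_nonneg_nonneg sum_list_nonneg) (auto intro!: add_nonneg_nonneg mult_nonneg_nonneg divide_nonneg_nonneg sum_nonneg)
    then show "0 \<le> ereal (E_lambda lam M phi D W rho)" by simp
  qed
  show "\<exists>W rho. (\<forall>i. rho i \<in> R) \<and> E_lambda lam M phi D W rho < - Q1
                 \<and> ens_error M phi D W rho > Q2 \<and> avg_member_error M phi D W rho > Q2"
    if "lam > 1" "Q1 > 0" "Q2 > 0" for Q1 Q2
    using construct[OF assms that] .
  show "(INF (W, rho) \<in> {(W, rho). \<forall>i. rho i \<in> R}. ereal (E_lambda lam M phi D W rho)) = -\<infinity>"
    if l: "lam > 1"
  proof (rule ereal_bot)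
    fix B :: real
    have p: "0 < max 1 (-B)" by simp
    obtain W :: "nat \<Rightarrow> real^'k^'q" and rho :: "nat \<Rightarrow> 'r" where wr: "\<forall>i. rho i \<in> R" "E_lambda lam M phi D W rho < - max 1 (- B)"
      using construct[OF assms l p zero_less_one] by blast
    have "(INF (W, rho) \<in> {(W, rho). \<forall>i. rho i \<in> R}. ereal (E_lambda lam M phi D W rho))
       \<le> ereal (E_lambda lam M phi D W rho)"
      using wr(1) by (intro INF_lower2[of "(W, rho)"]) auto
    also have "\<dots> \<le> ereal B" using wr(2) by simp
    finally show "(INF (W, rho) \<in> {(W, rho). \<forall>i. rho i \<in> R}. ereal (E_lambda lam M phi D W rho)) \<le> ereal B" .
  qed
qed

end
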